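(* Let $(S_1,\dots,S_{n-1},P)$ be a $\Gamma_n$-contraction on a Hilbert space $\mathcal H$, and let $(A_1,\dots,A_{n-1})$ and $(B_1,\dots,B_{n-1})$ be the fundamental operator tuples of $(S_1,\dots,S_{n-1},P)$ and $(S_1^*,\dots,S_{n-1}^*,P^* )$ respectively. Then $PA_i=B_i^*P|_{\mathcal D_P}$ for $i=1,\dots,n-1$ (as operators from $\mathcal D_P$ to $\mathcal D_{P^*}$).
   Context: $\Gamma_n=\pi_n(\overline{\mathbb D}^n)$ with $\pi_n$ the symmetrization map. A $\Gamma_n$-contraction is a commuting tuple with Taylor joint spectrum in $\Gamma_n$ and $\|f(\cdot)\|\le\sup_{\Gamma_n}|f|$ for polynomials. $D_T=(I-T^*T)^{1/2}$, $\mathcal D_T=\overline{\operatorname{Ran}}D_T$. The fundamental operator tuple of a $\Gamma_n$-contraction $(S_1,\dots,S_{n-1},P)$ is the unique $(F_1,\dots,F_{n-1})$ in $\mathcal B(\mathcal D_P)$ with $S_i-S_{n-i}^*P=D_PF_iD_P$; for the adjoint tuple, $B_i\in\mathcal B(\mathcal D_{P^*})$ with $S_i^*-S_{n-i}P^*=D_{P^*}B_iD_{P^*}$. *)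

theory Defs
  imports "HOL-Analysis.Analysis"
begin

class complex_vector = real_vector +
  fixes scaleC :: "complex \<Rightarrow> 'a \<Rightarrow> 'a"
  assumes scaleC_add_right: "scaleC a (x + y) = scaleC a x + scaleC a y"
    and scaleC_add_left: "scaleC (a + b) x = scaleC a x + scaleC b x"
    and scaleC_scaleC: "scaleC a (scaleC b x) = scaleC (a * b) x"
    and scaleC_one: "scaleC 1 x = x"
    and scaleR_scaleC: "scaleR r x = scaleC (complex_of_real r) x"

class complex_inner = complex_vector + real_normed_vector +
  fixes cinner :: "'a \<Rightarrow> 'a \<Rightarrow> complex"
  assumes cinner_commute: "cinner x y = cnj (cinner y x)"
    and cinner_add_left: "cinner (x + y) z = cinner x z + cinner y z"
    and cinner_scaleC_left: "cinner (scaleC r x) y = cnj r * cinner x y"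
    and cinner_real: "Im (cinner x x) = 0"
    and cinner_ge_zero: "0 \<le> Re (cinner x x)"
    and cinner_eq_zero_iff: "cinner x x = 0 \<longleftrightarrow> x = 0"
    and norm_eq_sqrt_cinner: "norm x = sqrt (Re (cinner x x))"

class chilbert = complex_inner + complete_space

definition bounded_op :: "('a::complex_inner \<Rightarrow> 'a) \<Rightarrow> bool" where
  "bounded_op T \<longleftrightarrow> (\<forall>x y. T (x + y) = T x + T y) \<and> (\<forall>c x. T (scaleC c x) = scaleC c (T x))
     \<and> (\<exists>K. \<forall>x. norm (T x) \<le> norm x * K)"

definition hadjoint :: "('a::complex_inner \<Rightarrow> 'a) \<Rightarrow> ('a \<Rightarrow> 'a)" where
  "hadjoint T = (THE T'. \<forall>x y. cinner (T x) y = cinner x (T' y))"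

definition positive_op :: "('a::complex_inner \<Rightarrow> 'a) \<Rightarrow> bool" where
  "positive_op R \<longleftrightarrow> bounded_op R \<and> (\<forall>x. Im (cinner (R x) x) = 0 \<and> 0 \<le> Re (cinner (R x) x))"

definition defect :: "('a::complex_inner \<Rightarrow> 'a) \<Rightarrow> ('a \<Rightarrow> 'a)" where
  "defect T = (THE R. positive_op R \<and> (\<forall>x. R (R x) = x - hadjoint T (T x)))"

definition defect_space :: "('a::complex_inner \<Rightarrow> 'a) \<Rightarrow> 'a set" where
  "defect_space T = closure (range (defect T))"

text \<open>An operator in B(M), M a closed subspace, is represented faithfully by the
  operator on the whole space that maps M into M and vanishes on the orthogonal complement.\<close>
definition op_on :: "'a::complex_inner set \<Rightarrow> ('a \<Rightarrow> 'a) \<Rightarrow> bool" where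
  "op_on M F \<longleftrightarrow> bounded_op F \<and> F ` M \<subseteq> M \<and> (\<forall>x. (\<forall>m\<in>M. cinner x m = 0) \<longrightarrow> F x = 0)"

definition fundamental_tuple ::
  "nat \<Rightarrow> (nat \<Rightarrow> 'a::complex_inner \<Rightarrow> 'a) \<Rightarrow> ('a \<Rightarrow> 'a) \<Rightarrow> (nat \<Rightarrow> 'a \<Rightarrow> 'a) \<Rightarrow> bool" where
  "fundamental_tuple n S P F \<longleftrightarrow>
     (\<forall>i\<in>{1..n-1}. op_on (defect_space P) (F i) \<and>
        (\<forall>x. S i x - hadjoint (S (n - i)) (P x) = defect P (F i (defect P x))))"

text \<open>Points of C^n are functions nat => complex, coordinates 1..n (zero elsewhere).\<close>
definition esym :: "nat \<Rightarrow> nat \<Rightarrow> (nat \<Rightarrow> complex) \<Rightarrow> complex" where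
  "esym n k z = (\<Sum>I\<in>{I. I \<subseteq> {1..n} \<and> card I = k}. \<Prod>i\<in>I. z i)"

definition Gamma :: "nat \<Rightarrow> (nat \<Rightarrow> complex) set" where
  "Gamma n = {w. \<exists>z. (\<forall>j\<in>{1..n}. cmod (z j) \<le> 1) \<and> (\<forall>k\<in>{1..n}. w k = esym n k z)
                    \<and> (\<forall>k. k \<notin> {1..n} \<longrightarrow> w k = 0)}"

text \<open>A polynomial in n variables: finite set M of multi-indices (nat => nat, exponents of
  variables 1..n) with coefficients c.\<close>
definition poly_eval :: "nat \<Rightarrow> (nat \<Rightarrow> nat) set \<Rightarrow> ((nat \<Rightarrow> nat) \<Rightarrow> complex) \<Rightarrow> (nat \<Rightarrow> complex) \<Rightarrow> complex" where
  "poly_eval n M c w = (\<Sum>\<alpha>\<in>M. c \<alpha> * (\<Prod>j\<in>{1..n}. w j ^ \<alpha> j))"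

fun op_monomial :: "(nat \<Rightarrow> 'a \<Rightarrow> 'a) \<Rightarrow> (nat \<Rightarrow> nat) \<Rightarrow> nat \<Rightarrow> 'a \<Rightarrow> 'a" where
  "op_monomial T \<alpha> 0 = id"
| "op_monomial T \<alpha> (Suc k) = op_monomial T \<alpha> k \<circ> (T (Suc k) ^^ \<alpha> (Suc k))"

definition poly_op :: "nat \<Rightarrow> (nat \<Rightarrow> nat) set \<Rightarrow> ((nat \<Rightarrow> nat) \<Rightarrow> complex) \<Rightarrow> (nat \<Rightarrow> 'a::complex_vector \<Rightarrow> 'a) \<Rightarrow> 'a \<Rightarrow> 'a" where
  "poly_op n M c T x = (\<Sum>\<alpha>\<in>M. scaleC (c \<alpha>) (op_monomial T \<alpha> n x))"

definition gtuple :: "nat \<Rightarrow> (nat \<Rightarrow> 'a \<Rightarrow> 'a) \<Rightarrow> ('a \<Rightarrow> 'a) \<Rightarrow> nat \<Rightarrow> 'a \<Rightarrow> 'a" where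
  "gtuple n S P j = (if j = n then P else S j)"

definition gamma_contraction :: "nat \<Rightarrow> (nat \<Rightarrow> 'a::complex_inner \<Rightarrow> 'a) \<Rightarrow> ('a \<Rightarrow> 'a) \<Rightarrow> bool" where
  "gamma_contraction n S P \<longleftrightarrow>
     (\<forall>j\<in>{1..n}. bounded_op (gtuple n S P j)) \<and>
     (\<forall>j\<in>{1..n}. \<forall>k\<in>{1..n}. gtuple n S P j \<circ> gtuple n S P k = gtuple n S P k \<circ> gtuple n S P j) \<and>
     (\<forall>M c. finite M \<longrightarrow> (\<forall>x. norm (poly_op n M c (gtuple n S P) x)
            \<le> (SUP w\<in>Gamma n. cmod (poly_eval n M c w)) * norm x))"

end

theory Submission
  imports Defs "HOL-Computational_Algebra.Formal_Power_Series"
begin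

subclass (in chilbert) banach ..

lemma scaleC_zero_right [simp]: "scaleC a (0::'a::complex_vector) = 0"
proof -
  have "scaleC a (0::'a) = scaleC a 0 + scaleC a 0"
    using scaleC_add_right[of a "0::'a" 0] by simp
  then show ?thesis by simp
qed

lemma scaleC_of_real: "scaleC (complex_of_real r) (x::'a::complex_vector) = scaleR r x"
  by (simp add: scaleR_scaleC)

lemma scaleC_zero_left [simp]: "scaleC 0 (x::'a::complex_vector) = 0"
  using scaleC_of_real[of 0 x] by simp

lemma scaleC_minus_right: "scaleC a (- (x::'a::complex_vector)) = - scaleC a x"
proof -
  have "scaleC a (- x) + scaleC a x = 0"
    using scaleC_add_right[of a "-x" x, symmetric] by simp
  then show ?thesis by (simp add: eq_neg_iff_add_eq_0)
qed

lemma scaleC_diff_right: "scaleC a ((x::'a::complex_vector) - y) = scaleC a x - scaleC a y"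
  using scaleC_add_right[of a x "-y"] scaleC_minus_right[of a y] by simp

lemma scaleC_scaleR_comm: "scaleC a (scaleR r (x::'a::complex_vector)) = scaleR r (scaleC a x)"
  by (simp add: scaleR_scaleC scaleC_scaleC mult.commute)

lemma scaleC_minus1: "scaleC (-1) (x::'a::complex_vector) = - x"
  using scaleC_of_real[of "-1" x] by simp

lemma scaleC_sum_right: "scaleC a (sum f A) = sum (\<lambda>i. scaleC a (f i :: 'a::complex_vector)) A"
  by (induction A rule: infinite_finite_induct) (auto simp: scaleC_add_right)

lemma cinner_zero_left [simp]: "cinner 0 (y::'a::complex_inner) = 0"
  using cinner_add_left[of "0::'a" 0 y] by simp

lemma cinner_add_right: "cinner (x::'a::complex_inner) (y + z) = cinner x y + cinner x z"
  by (metis cinner_add_left cinner_commute complex_cnj_add)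

lemma cinner_zero_right [simp]: "cinner (x::'a::complex_inner) 0 = 0"
  by (metis cinner_commute cinner_zero_left complex_cnj_zero)

lemma cinner_scaleC_right: "cinner (x::'a::complex_inner) (scaleC r y) = r * cinner x y"
  by (metis cinner_commute cinner_scaleC_left complex_cnj_cnj complex_cnj_mult)

lemma cinner_minus_left: "cinner (- x::'a::complex_inner) y = - cinner x y"
  using cinner_add_left[of "-x" x y] by (simp add: eq_neg_iff_add_eq_0)

lemma cinner_minus_right: "cinner (x::'a::complex_inner) (- y) = - cinner x y"
  using cinner_add_right[of x "-y" y] by (simp add: eq_neg_iff_add_eq_0)

lemma cinner_diff_left: "cinner (x - y::'a::complex_inner) z = cinner x z - cinner y z"
  using cinner_add_left[of x "-y" z] by (simp add: cinner_minus_left)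

lemma cinner_diff_right: "cinner (x::'a::complex_inner) (y - z) = cinner x y - cinner x z"
  using cinner_add_right[of x y "-z"] by (simp add: cinner_minus_right)

lemma cinner_scaleR_left: "cinner (scaleR r x::'a::complex_inner) y = of_real r * cinner x y"
  by (simp add: scaleR_scaleC cinner_scaleC_left)

lemma cinner_scaleR_right: "cinner (x::'a::complex_inner) (scaleR r y) = of_real r * cinner x y"
  by (simp add: scaleR_scaleC cinner_scaleC_right)

lemma cinner_sum_left: "cinner (sum f A) (y::'a::complex_inner) = (\<Sum>i\<in>A. cinner (f i) y)"
  by (induction A rule: infinite_finite_induct) (auto simp: cinner_add_left)

lemma cinner_self: "cinner x (x::'a::complex_inner) = complex_of_real ((norm x)\<^sup>2)"
proof -
  have "(norm x)\<^sup>2 = Re (cinner x x)" using norm_eq_sqrt_cinner[of x] cinner_ge_zero[of x] by simp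
  then show ?thesis using cinner_real[of x] by (simp add: complex_eq_iff)
qed

lemma Re_cinner_self: "Re (cinner x (x::'a::complex_inner)) = (norm x)\<^sup>2"
  by (simp add: cinner_self)

lemma cinner_cnj_swap: "cnj (cinner x (y::'a::complex_inner)) = cinner y x"
  by (metis cinner_commute)

lemma quad_zero:
  fixes q K :: real
  assumes "q \<ge> 0" "K \<ge> 0" "\<And>s. s > 0 \<Longrightarrow> 2 * s * q \<le> s\<^sup>2 * q * K"
  shows "q = 0"
proof -
  define s where "s = 1 / (K + 1)"
  have s: "s > 0" "s * K < 1" using assms(2) by (auto simp: s_def field_simps)
  have "2 * s * q \<le> s * ((s * K) * q)" using assms(3)[OF s(1)] by (simp add: power2_eq_square algebra_simps)
  also have "(s * K) * q \<le> 1 * q" using s assms(1) by (intro mult_right_mono) auto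
  then have "s * ((s * K) * q) \<le> s * q" using s by simp
  finally have "s * q \<le> 0" by (simp add: mult.commute)
  then show ?thesis using s(1) assms(1) by (simp add: mult_le_0_iff)
qed

lemma cinner_expand:
  "cinner (x + scaleC t y) (x + scaleC t (y::'a::complex_inner)) =
     cinner x x + cnj t * cinner y x + t * cinner x y + cnj t * t * cinner y y"
  by (simp add: cinner_add_left cinner_add_right cinner_scaleC_left cinner_scaleC_right algebra_simps)

lemma orth_from_min:
  fixes z w :: "'a::complex_inner" and K :: real
  assumes "\<And>t. Re (cinner z z) \<le> Re (cinner (z + scaleC t w) (z + scaleC t w))"
  shows "cinner z w = 0"
proof -
  define a where "a = cinner z w"
  have cw: "cinner w z = cnj a" by (simp add: a_def cinner_cnj_swap)
  have K: "Re (cinner w w) \<ge> 0" by (rule cinner_ge_zero)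
  have "cmod a ^ 2 = 0"
  proof (rule quad_zero[where K = "Re (cinner w w)"])
    fix s :: real assume "s > 0"
    define t where "t = - complex_of_real s * cnj a"
    have cm: "(cmod a)^2 = Re a * Re a + Im a * Im a" using cmod_power2[of a] by (simp add: power2_eq_square)
    have "Re (cinner z z) \<le> Re (cinner (z + scaleC t w) (z + scaleC t w))" by (rule assms)
    also have "\<dots> = Re (cinner z z) - 2 * s * (cmod a)^2 + s^2 * (cmod a)^2 * Re (cinner w w)"
      unfolding cinner_expand cw a_def[symmetric] t_def
      using cinner_real[of w] unfolding cm
      by (simp add: algebra_simps power2_eq_square)
    finally show "2 * s * (cmod a)\<^sup>2 \<le> s\<^sup>2 * (cmod a)\<^sup>2 * Re (cinner w w)" by simp
  qed (use K in auto)
  then show ?thesis by (simp add: a_def)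
qed

lemma cauchy_schwarz: "cmod (cinner x (y::'a::complex_inner)) \<le> norm x * norm y"
proof (cases "y = 0")
  case True then show ?thesis by simp
next
  case False
  define a where "a = cinner y x"
  define t where "t = - a / complex_of_real ((norm y)\<^sup>2)"
  have ny: "norm y > 0" using False by simp
  have cxy: "cinner x y = cnj a" by (simp add: a_def cinner_cnj_swap)
  define N where "N = (norm y)\<^sup>2"
  have N: "N > 0" using ny by (simp add: N_def)
  have ac: "a * cnj a = complex_of_real ((cmod a)^2)" by (metis complex_norm_square of_real_power)
  have e1: "cnj t * a = - complex_of_real ((cmod a)\<^sup>2 / N)"
  proof -
    have "cnj t * a = - (a * cnj a) / complex_of_real N" by (simp add: t_def N_def mult.commute)
    then show ?thesis by (simp add: ac)
  qed
  have e2: "t * cnj a = - complex_of_real ((cmod a)\<^sup>2 / N)"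
  proof -
    have "t * cnj a = - (a * cnj a) / complex_of_real N" by (simp add: t_def N_def)
    then show ?thesis by (simp add: ac)
  qed
  have e3: "cnj t * t * complex_of_real N = complex_of_real ((cmod a)\<^sup>2 / N)"
  proof -
    have tN: "t * complex_of_real N = - a" using N by (simp add: t_def N_def)
    have "cnj t * t * complex_of_real N = cnj t * (t * complex_of_real N)" by (simp add: mult.assoc)
    also have "\<dots> = - (cnj t * a)" using tN by simp
    finally show ?thesis using e1 by simp
  qed
  have "0 \<le> Re (cinner (x + scaleC t y) (x + scaleC t y))" by (rule cinner_ge_zero)
  also have "cinner (x + scaleC t y) (x + scaleC t y) = cinner x x + cnj t * a + t * cnj a + cnj t * t * complex_of_real N"
    unfolding cinner_expand cxy a_def[symmetric] N_def by (simp only: cinner_self[of y])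
  also have "\<dots> = complex_of_real ((norm x)^2 - (cmod a)^2 / N)"
    unfolding e1 e2 e3 cinner_self[of x] by simp
  also have "Re \<dots> = (norm x)^2 - (cmod a)^2 / N" by simp
  finally have "(cmod a)^2 \<le> (norm x)^2 * N" using N by (simp add: field_simps)
  then have "(cmod a)^2 \<le> (norm x * norm y)^2" by (simp add: N_def power_mult_distrib)
  then have "cmod a \<le> norm x * norm y" by (simp add: power_mono_iff abs_le_square_iff)
  then show ?thesis by (metis a_def cinner_commute complex_mod_cnj)
qed

lemma cinner_ext: "(\<And>z. cinner x z = cinner y (z::'a::complex_inner)) \<Longrightarrow> x = y"
proof -
  assume h: "\<And>z. cinner x z = cinner y z"
  have "cinner (x - y) (x - y) = 0" by (simp add: cinner_diff_left h)
  then show "x = y" by (simp add: cinner_eq_zero_iff)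
qed

lemma cinner_ext_right: "(\<And>z. cinner z x = cinner z (y::'a::complex_inner)) \<Longrightarrow> x = y"
  by (rule cinner_ext) (metis cinner_commute)

lemma norm_scaleC: "norm (scaleC c (x::'a::complex_inner)) = cmod c * norm x"
proof -
  have "cinner (scaleC c x) (scaleC c x) = (cnj c * c) * cinner x x"
    by (simp add: cinner_scaleC_left cinner_scaleC_right)
  also have "\<dots> = complex_of_real ((cmod c * norm x)^2)"
    using complex_norm_square[of c] by (simp add: cinner_self power_mult_distrib mult.commute)
  finally have "(norm (scaleC c x))^2 = (cmod c * norm x)^2"
    using Re_cinner_self[of "scaleC c x"] by simp
  then show ?thesis by (simp add: power2_eq_iff_nonneg)
qed

lemma bounded_linear_scaleC: "bounded_linear (\<lambda>x::'a::complex_inner. scaleC c x)"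
  by (rule bounded_linear_intro[where K = "cmod c"])
     (auto simp: scaleC_add_right scaleC_scaleR_comm norm_scaleC)

lemma bounded_linear_cinner_left: "bounded_linear (\<lambda>x::'a::complex_inner. cinner x y)"
  by (rule bounded_linear_intro[where K = "norm y"])
     (auto simp: cinner_add_left cinner_scaleR_left cauchy_schwarz scaleR_conv_of_real)

lemma bounded_linear_cinner_right: "bounded_linear (\<lambda>y::'a::complex_inner. cinner x y)"
  by (rule bounded_linear_intro[where K = "norm x"])
     (auto simp: cinner_add_right cinner_scaleR_right scaleR_conv_of_real, metis cauchy_schwarz mult.commute)


lemma bop_add: "bounded_op T \<Longrightarrow> T (x + y) = T x + T y"
  by (simp add: bounded_op_def)
lemma bop_scaleC: "bounded_op T \<Longrightarrow> T (scaleC c x) = scaleC c (T x)"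
  by (simp add: bounded_op_def)
lemma bop_scaleR: "bounded_op T \<Longrightarrow> T (scaleR r x) = scaleR r (T x)"
  by (simp add: bounded_op_def scaleR_scaleC)
lemma bop_bound: "bounded_op T \<Longrightarrow> \<exists>K>0. \<forall>x. norm (T x) \<le> norm x * K"
proof -
  assume "bounded_op T"
  then obtain K where K: "\<And>x. norm (T x) \<le> norm x * K" by (auto simp: bounded_op_def)
  have "norm (T x) \<le> norm x * (max K 0 + 1)" for x
    using K[of x] by (smt (verit) mult_left_mono norm_ge_zero)
  then show ?thesis by (intro exI[of _ "max K 0 + 1"]) auto
qed
lemma bop_linear: "bounded_op T \<Longrightarrow> bounded_linear T"
proof -
  assume T: "bounded_op T"
  then obtain K where "\<And>x. norm (T x) \<le> norm x * K" by (auto simp: bounded_op_def)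
  then show ?thesis by (intro bounded_linear_intro[where K = K]) (auto simp: bop_add[OF T] bop_scaleR[OF T])
qed
lemma bop_zero: "bounded_op T \<Longrightarrow> T 0 = 0"
  using bop_linear linear_simps(3) by (metis bounded_linear.linear)
lemma bop_minus: "bounded_op T \<Longrightarrow> T (- x) = - T x"
  using bop_linear by (metis bounded_linear.linear linear_simps(4))
lemma bop_diff: "bounded_op T \<Longrightarrow> T (x - y) = T x - T y"
  using bop_linear by (metis bounded_linear.linear linear_simps(2))
lemma bop_sum: "bounded_op T \<Longrightarrow> T (sum f A) = (\<Sum>i\<in>A. T (f i))"
  using bop_linear by (metis bounded_linear.linear linear_sum)

lemma bop_comp: "bounded_op T \<Longrightarrow> bounded_op U \<Longrightarrow> bounded_op (\<lambda>x. T (U x))"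
proof -
  assume T: "bounded_op T" and U: "bounded_op U"
  obtain K where K: "K > 0" "\<And>x. norm (T x) \<le> norm x * K" using bop_bound[OF T] by auto
  obtain L where L: "L > 0" "\<And>x. norm (U x) \<le> norm x * L" using bop_bound[OF U] by auto
  have "norm (T (U x)) \<le> norm x * (L * K)" for x
    using K(2)[of "U x"] L(2)[of x] K(1) by (smt (verit) mult.assoc mult_right_mono)
  then show ?thesis unfolding bounded_op_def using bop_add[OF T] bop_add[OF U] bop_scaleC[OF T] bop_scaleC[OF U]
    by auto
qed

lemma bop_diff_op: "bounded_op T \<Longrightarrow> bounded_op U \<Longrightarrow> bounded_op (\<lambda>x. T x - U x)"
proof -
  assume T: "bounded_op T" and U: "bounded_op U"
  obtain K where K: "\<And>x. norm (T x) \<le> norm x * K" using bop_bound[OF T] by auto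
  obtain L where L: "\<And>x. norm (U x) \<le> norm x * L" using bop_bound[OF U] by auto
  have "norm (T x - U x) \<le> norm x * (K + L)" for x
    using K[of x] L[of x] norm_triangle_ineq4[of "T x" "U x"] by (simp add: distrib_left)
  then show ?thesis unfolding bounded_op_def using bop_add[OF T] bop_add[OF U] bop_scaleC[OF T] bop_scaleC[OF U]
    by (auto simp: scaleC_diff_right)
qed

lemma bop_id: "bounded_op (\<lambda>x. x)"
  unfolding bounded_op_def by (auto intro: exI[of _ 1])

lemma bop_iter: "bounded_op T \<Longrightarrow> bounded_op (T ^^ k)"
proof (induction k)
  case 0 then show ?case using bop_id by (simp add: id_def)
next
  case (Suc k) then show ?case using bop_comp[of T "T ^^ k"] by (simp add: o_def)
qed

section \<open>Riesz representation\<close>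

lemma parallelogram: "(norm (x + y))\<^sup>2 + (norm (x - y))\<^sup>2 = 2 * (norm x)\<^sup>2 + 2 * (norm (y::'a::complex_inner))\<^sup>2"
proof -
  have "cinner (x + y) (x + y) + cinner (x - y) (x - y) = 2 * cinner x x + 2 * cinner y y"
    by (simp add: cinner_add_left cinner_add_right cinner_diff_left cinner_diff_right)
  then have "Re (cinner (x + y) (x + y)) + Re (cinner (x - y) (x - y)) = 2 * Re (cinner x x) + 2 * Re (cinner y y)"
    by (metis (no_types) plus_complex.sel(1) Re_complex_of_real of_real_numeral times_complex.sel(1) mult_2
        Im_complex_of_real cinner_self zero_complex.sel(1) mult_zero_right diff_zero)
  then show ?thesis by (simp add: Re_cinner_self)
qed

lemma riesz:
  fixes f :: "'a::chilbert \<Rightarrow> complex"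
  assumes add: "\<And>x y. f (x + y) = f x + f y" and sc: "\<And>c x. f (scaleC c x) = c * f x"
    and bd: "\<And>x. cmod (f x) \<le> norm x * K"
  shows "\<exists>y. \<forall>x. f x = cinner y x"
proof (cases "\<forall>x. f x = 0")
  case True then show ?thesis by (intro exI[of _ 0]) auto
next
  case False
  then obtain x0 where x0: "f x0 \<noteq> 0" by auto
  have lin: "bounded_linear f"
    by (rule bounded_linear_intro[where K = K]) (auto simp: add scaleR_scaleC sc scaleR_conv_of_real bd)
  define H where "H = {x. f x = 1}"
  have x1: "scaleC (1 / f x0) x0 \<in> H" using x0 by (simp add: H_def sc)
  define d where "d = Inf (norm ` H)"
  have bdd: "bdd_below (norm ` H)" by (rule bdd_belowI[of _ 0]) auto
  have dle: "d \<le> norm x" if "x \<in> H" for x unfolding d_def using bdd that by (simp add: cInf_lower)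
  have d0: "d \<ge> 0" unfolding d_def using x1 by (intro cInf_greatest) auto
  have "\<exists>u. u \<in> H \<and> norm u < d + 1 / Suc k" for k
  proof -
    have "Inf (norm ` H) < d + 1 / Suc k" unfolding d_def by simp
    then obtain v where "v \<in> norm ` H" "v < d + 1 / Suc k"
      using x1 by (metis cInf_lessD empty_iff image_is_empty)
    then show ?thesis by auto
  qed
  then obtain u where u: "\<And>k. u k \<in> H" "\<And>k. norm (u k) < d + 1 / Suc k" by metis
  have mid: "2 * d \<le> norm (u m + u n)" for m n
  proof -
    have "scaleR (1/2) (u m + u n) \<in> H" using u(1)[of m] u(1)[of n]
      by (simp add: H_def scaleR_scaleC sc add)
    then have "d \<le> norm (scaleR (1/2) (u m + u n))" by (rule dle)
    then show ?thesis by simp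
  qed
  have cauchy: "Cauchy u"
  proof (rule CauchyI)
    fix e :: real assume e: "e > 0"
    obtain N :: nat where N: "(8 * d + 4) / e\<^sup>2 < N" using reals_Archimedean2 by blast
    have "\<forall>m\<ge>N. \<forall>n\<ge>N. norm (u m - u n) < e"
    proof (intro allI impI)
      fix m n assume mn: "N \<le> m" "N \<le> n"
      define em where "em = 1 / real (Suc m)"
      define en where "en = 1 / real (Suc n)"
      have em: "0 < em" "em \<le> 1" "em < e\<^sup>2 / (8 * d + 4)"
      proof -
        show "0 < em" "em \<le> 1" by (auto simp: em_def)
        have "(8 * d + 4) / e\<^sup>2 < Suc m" using N mn by linarith
        then show "em < e\<^sup>2 / (8 * d + 4)" using e d0 by (simp add: em_def field_simps)
      qed
      have en: "0 < en" "en \<le> 1" "en < e\<^sup>2 / (8 * d + 4)"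
      proof -
        show "0 < en" "en \<le> 1" by (auto simp: en_def)
        have "(8 * d + 4) / e\<^sup>2 < Suc n" using N mn by linarith
        then show "en < e\<^sup>2 / (8 * d + 4)" using e d0 by (simp add: en_def field_simps)
      qed
      have um: "norm (u m) \<le> d + em" and un: "norm (u n) \<le> d + en"
        using u(2)[of m] u(2)[of n] by (auto simp: em_def en_def)
      have "(norm (u m - u n))\<^sup>2 = 2 * (norm (u m))\<^sup>2 + 2 * (norm (u n))\<^sup>2 - (norm (u m + u n))\<^sup>2"
        using parallelogram[of "u m" "u n"] by simp
      also have "\<dots> \<le> 2 * (d + em)\<^sup>2 + 2 * (d + en)\<^sup>2 - (2 * d)\<^sup>2"
        using um un mid[of m n] d0 by (intro diff_mono add_mono mult_left_mono power_mono) auto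
      also have "\<dots> = 4 * d * (em + en) + 2 * em * em + 2 * en * en"
        by (simp add: power2_eq_square algebra_simps)
      also have "\<dots> \<le> 4 * d * (em + en) + 2 * em + 2 * en"
        using em en by (intro add_mono) (auto simp: mult_left_le_one_le mult_right_le_one_le)
      also have "\<dots> = (4 * d + 2) * (em + en)" by (simp add: algebra_simps)
      also have "\<dots> < (4 * d + 2) * (2 * (e\<^sup>2 / (8 * d + 4)))"
        using em en d0 by (intro mult_strict_left_mono) auto
      also have "\<dots> = e\<^sup>2" using d0 by (simp add: field_simps)
      finally have "(norm (u m - u n))\<^sup>2 < e\<^sup>2" .
      then show "norm (u m - u n) < e" using e by (simp add: power_less_imp_less_base)
    qed
    then show "\<exists>M. \<forall>m\<ge>M. \<forall>n\<ge>M. norm (u m - u n) < e" by blast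
  qed
  then obtain z where lim: "u \<longlonglongrightarrow> z" using Cauchy_convergent_iff convergent_def by blast
  have "(\<lambda>k. f (u k)) \<longlonglongrightarrow> f z" by (rule bounded_linear.tendsto[OF lin lim])
  moreover have "(\<lambda>k. f (u k)) = (\<lambda>k. 1)" using u(1) by (auto simp: H_def)
  ultimately have fz: "f z = 1" by (simp add: LIMSEQ_const_iff)
  have nz: "norm z \<le> d"
  proof -
    have "(\<lambda>k. norm (u k)) \<longlonglongrightarrow> norm z" by (rule tendsto_norm[OF lim])
    moreover have "(\<lambda>k. d + 1 / Suc k) \<longlonglongrightarrow> d + 0"
      by (intro tendsto_add tendsto_const) (rule LIMSEQ_Suc[OF lim_const_over_n[of 1]]) 
    ultimately show ?thesis using u(2) by (intro LIMSEQ_le[where X = "\<lambda>k. norm (u k)"]) (auto intro: less_imp_le)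
  qed
  have zmin: "norm z \<le> norm x" if "x \<in> H" for x using dle[OF that] nz by simp
  have orth: "cinner z w = 0" if "f w = 0" for w
  proof (rule orth_from_min)
    fix t
    have "z + scaleC t w \<in> H" using fz that by (simp add: H_def add sc)
    then have "norm z \<le> norm (z + scaleC t w)" by (rule zmin)
    then have "(norm z)\<^sup>2 \<le> (norm (z + scaleC t w))\<^sup>2" by (simp add: power_mono)
    then show "Re (cinner z z) \<le> Re (cinner (z + scaleC t w) (z + scaleC t w))" by (simp add: Re_cinner_self)
  qed
  have z0: "z \<noteq> 0" using fz lin by (metis bounded_linear.linear linear_0 zero_neq_one)
  define c where "c = cinner z z"
  have c0: "c \<noteq> 0" using z0 by (simp add: c_def cinner_eq_zero_iff)
  have cr: "cnj c = c" by (simp add: c_def cinner_self)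
  have key: "cinner z x = f x * c" for x
  proof -
    have "f (x - scaleC (f x) z) = 0"
      using add[of "x - scaleC (f x) z" "scaleC (f x) z"] by (simp add: sc fz)
    then have "cinner z (x - scaleC (f x) z) = 0" by (rule orth)
    then show ?thesis by (simp add: cinner_diff_right cinner_scaleC_right c_def)
  qed
  show ?thesis
  proof (intro exI allI)
    fix x
    show "f x = cinner (scaleC (1 / c) z) x" using c0 cr
      by (simp add: cinner_scaleC_left key)
  qed
qed

section \<open>Adjoints\<close>

lemma adj_exists:
  fixes T :: "'a::chilbert \<Rightarrow> 'a"
  assumes T: "bounded_op T"
  shows "\<exists>T'. \<forall>x y. cinner (T x) y = cinner x (T' y)"
proof -
  obtain K where K: "K > 0" "\<And>x. norm (T x) \<le> norm x * K" using bop_bound[OF T] by auto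
  have "\<exists>z. \<forall>x. cinner y (T x) = cinner z x" for y
  proof (rule riesz[where K = "norm y * K"])
    fix x show "cmod (cinner y (T x)) \<le> norm x * (norm y * K)"
      using cauchy_schwarz[of y "T x"] K(2)[of x]
      by (smt (verit) mult.commute mult.left_commute mult_left_mono norm_ge_zero)
  qed (auto simp: bop_add[OF T] bop_scaleC[OF T] cinner_add_right cinner_scaleC_right)
  then obtain G where G: "\<And>y x. cinner y (T x) = cinner (G y) x" by metis
  show ?thesis
    by (intro exI[of _ G] allI) (metis G cinner_commute)
qed

lemma adj_prop:
  fixes T :: "'a::chilbert \<Rightarrow> 'a"
  assumes T: "bounded_op T"
  shows "cinner (T x) y = cinner x (hadjoint T y)"
proof -
  have "\<exists>!T'. \<forall>x y. cinner (T x) y = cinner x (T' y)"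
  proof (rule ex_ex1I)
    show "\<exists>T'. \<forall>x y. cinner (T x) y = cinner x (T' y)" by (rule adj_exists[OF T])
  next
    fix G1 G2
    assume "\<forall>x y. cinner (T x) y = cinner x (G1 y)" "\<forall>x y. cinner (T x) y = cinner x (G2 y)"
    then have "G1 y = G2 y" for y by (intro cinner_ext_right) auto
    then show "G1 = G2" by auto
  qed
  then have "\<forall>x y. cinner (T x) y = cinner x (hadjoint T y)"
    unfolding hadjoint_def by (rule theI')
  then show ?thesis by blast
qed

lemma adj_prop2:
  fixes T :: "'a::chilbert \<Rightarrow> 'a"
  assumes T: "bounded_op T"
  shows "cinner (hadjoint T x) y = cinner x (T y)"
  by (metis adj_prop[OF T] cinner_commute)

lemma adj_unique:
  fixes T :: "'a::chilbert \<Rightarrow> 'a"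
  assumes T: "bounded_op T" and G: "\<And>x y. cinner (T x) y = cinner x (G y)"
  shows "hadjoint T = G"
proof
  fix y show "hadjoint T y = G y"
    by (rule cinner_ext_right) (metis G adj_prop[OF T])
qed

lemma adj_norm:
  fixes T :: "'a::chilbert \<Rightarrow> 'a"
  assumes T: "bounded_op T" and K: "K \<ge> 0" "\<And>x. norm (T x) \<le> norm x * K"
  shows "norm (hadjoint T y) \<le> norm y * K"
proof (cases "hadjoint T y = 0")
  case True then show ?thesis using K by simp
next
  case False
  let ?v = "hadjoint T y"
  have "(norm ?v)\<^sup>2 = Re (cinner ?v ?v)" by (simp add: Re_cinner_self)
  also have "\<dots> = Re (cinner y (T ?v))" by (simp add: adj_prop2[OF T])
  also have "\<dots> \<le> cmod (cinner y (T ?v))" by (rule complex_Re_le_cmod)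
  also have "\<dots> \<le> norm y * norm (T ?v)" by (rule cauchy_schwarz)
  also have "\<dots> \<le> norm y * (norm ?v * K)" using K by (simp add: mult_left_mono)
  finally have "norm ?v * norm ?v \<le> norm ?v * (norm y * K)" by (simp add: power2_eq_square algebra_simps)
  then show ?thesis using False by simp
qed

lemma adj_bop:
  fixes T :: "'a::chilbert \<Rightarrow> 'a"
  assumes T: "bounded_op T"
  shows "bounded_op (hadjoint T)"
proof -
  obtain K where K: "K > 0" "\<And>x. norm (T x) \<le> norm x * K" using bop_bound[OF T] by auto
  have a: "hadjoint T (x + y) = hadjoint T x + hadjoint T y" for x y
    by (rule cinner_ext_right) (simp add: adj_prop[OF T, symmetric] cinner_add_right)
  have s: "hadjoint T (scaleC c x) = scaleC c (hadjoint T x)" for c x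
    by (rule cinner_ext_right) (simp add: adj_prop[OF T, symmetric] cinner_scaleC_right)
  show ?thesis unfolding bounded_op_def using a s adj_norm[OF T _ K(2)] K(1) by auto
qed

lemma adj_adj:
  fixes T :: "'a::chilbert \<Rightarrow> 'a"
  assumes T: "bounded_op T"
  shows "hadjoint (hadjoint T) = T"
  by (rule adj_unique[OF adj_bop[OF T]]) (simp add: adj_prop2[OF T])


lemma op_monomial_id:
  assumes "\<And>j. j \<le> k \<Longrightarrow> j \<ge> 1 \<Longrightarrow> \<alpha> j = 0"
  shows "op_monomial T \<alpha> k = id"
  using assms
proof (induction k)
  case 0 then show ?case by simp
next
  case (Suc k) then show ?case by simp
qed

lemma esym_top: "esym n n z = (\<Prod>i\<in>{1..n}. z i)"
proof -
  have "{I. I \<subseteq> {1..n} \<and> card I = n} = {{1..n}}"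
  proof (intro equalityI subsetI)
    fix I assume "I \<in> {I. I \<subseteq> {1..n} \<and> card I = n}"
    then have "I \<subseteq> {1..n}" "card I = card {1..n}" by auto
    then have "I = {1..n}" by (intro card_subset_eq) auto
    then show "I \<in> {{1..n}}" by simp
  qed auto
  then show ?thesis by (simp add: esym_def)
qed

lemma gamma_facts:
  assumes G: "gamma_contraction n S P" and n: "n \<ge> 1"
  shows "bounded_op P"
    and "\<And>i. i \<in> {1..n-1} \<Longrightarrow> bounded_op (S i)"
    and "\<And>i. i \<in> {1..n-1} \<Longrightarrow> S i (P x) = P (S i x)"
    and "norm (P x) \<le> norm x"
proof -
  have g: "gtuple n S P n = P" by (simp add: gtuple_def)
  have gi: "i \<in> {1..n-1} \<Longrightarrow> gtuple n S P i = S i" for i by (auto simp: gtuple_def)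
  show "bounded_op P" using G n g unfolding gamma_contraction_def by (metis atLeastAtMost_iff order_refl)
  show "\<And>i. i \<in> {1..n-1} \<Longrightarrow> bounded_op (S i)"
    using G gi unfolding gamma_contraction_def by (metis atLeastAtMost_iff diff_le_self order_trans)
  show "\<And>i. i \<in> {1..n-1} \<Longrightarrow> S i (P x) = P (S i x)"
  proof -
    fix i assume i: "i \<in> {1..n-1}"
    then have "i \<in> {1..n}" by auto
    moreover have "n \<in> {1..n}" using n by auto
    ultimately have "gtuple n S P i \<circ> gtuple n S P n = gtuple n S P n \<circ> gtuple n S P i"
      using G unfolding gamma_contraction_def by blast
    then show "S i (P x) = P (S i x)" using gi[OF i] g by (metis comp_apply)
  qed
  define \<alpha> :: "nat \<Rightarrow> nat" where "\<alpha> = (\<lambda>j. if j = n then 1 else 0)"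
  define c :: "(nat \<Rightarrow> nat) \<Rightarrow> complex" where "c = (\<lambda>_. 1)"
  obtain m where m: "n = Suc m" using n by (cases n) auto
  have "op_monomial (gtuple n S P) \<alpha> m = id"
    by (rule op_monomial_id) (auto simp: \<alpha>_def m)
  then have opm: "op_monomial (gtuple n S P) \<alpha> n = P"
    by (simp add: m \<alpha>_def g[unfolded m])
  have pe: "poly_eval n {\<alpha>} c w = w n" for w
  proof -
    have "(\<Prod>j\<in>{1..n}. w j ^ \<alpha> j) = (\<Prod>j\<in>{1..n}. if j = n then w j else 1)"
      by (rule prod.cong) (auto simp: \<alpha>_def)
    also have "\<dots> = w n" using n by (simp add: prod.delta)
    finally show ?thesis by (simp add: poly_eval_def c_def)
  qed
  have bound: "norm (poly_op n {\<alpha>} c (gtuple n S P) x) \<le> (SUP w\<in>Gamma n. cmod (poly_eval n {\<alpha>} c w)) * norm x"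
    using G unfolding gamma_contraction_def by blast
  have po: "poly_op n {\<alpha>} c (gtuple n S P) x = P x"
    by (simp add: poly_op_def c_def opm scaleC_one)
  have ne: "Gamma n \<noteq> {}"
  proof -
    have "(\<lambda>k. if k \<in> {1..n} then esym n k (\<lambda>_. 0) else 0) \<in> Gamma n"
      unfolding Gamma_def by (rule CollectI, rule exI[of _ "\<lambda>_. 0"]) auto
    then show ?thesis by blast
  qed
  have le1: "cmod (w n) \<le> 1" if wG: "w \<in> Gamma n" for w
  proof -
    obtain z where z: "\<forall>j\<in>{1..n}. cmod (z j) \<le> 1" "\<forall>k\<in>{1..n}. w k = esym n k z"
      using wG unfolding Gamma_def by blast
    have "w n = (\<Prod>i\<in>{1..n}. z i)" using z(2) n by (simp add: esym_top)
    also have "cmod \<dots> = (\<Prod>i\<in>{1..n}. cmod (z i))" by (simp add: prod_norm)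
    also have "\<dots> \<le> (\<Prod>i\<in>{1..n}. 1)" using z(1) by (intro prod_mono) auto
    finally show ?thesis by simp
  qed
  have "(SUP w\<in>Gamma n. cmod (poly_eval n {\<alpha>} c w)) \<le> 1"
    using ne le1 by (intro cSUP_least) (auto simp: pe)
  then show "norm (P x) \<le> norm x" using bound po
    by (smt (verit) mult_right_mono norm_ge_zero mult_cancel_right1 mult.commute)
qed


section \<open>Coefficients of the square root series\<close>

definition sc :: "nat \<Rightarrow> real" where "sc k = (-1)^k * ((1/2::real) gchoose k)"

lemma sc_0 [simp]: "sc 0 = 1" by (simp add: sc_def)

lemma sc_eq: "sc k = pochhammer (-1/2) k / fact k"
  by (simp add: sc_def gbinomial_pochhammer power_mult_distrib[symmetric])

lemma sc_nonpos: "k \<ge> 1 \<Longrightarrow> sc k \<le> 0"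
proof -
  assume "k \<ge> 1"
  then obtain j where k: "k = Suc j" by (cases k) auto
  have "pochhammer (-1/2::real) k = (-1/2) * pochhammer (1/2) j" by (simp add: k pochhammer_rec)
  moreover have "pochhammer (1/2::real) j > 0" by (rule pochhammer_pos) simp
  ultimately show ?thesis by (simp add: sc_eq divide_nonpos_pos)
qed

lemma sc_partial: "(\<Sum>k\<le>N. sc k) = pochhammer (1/2) N / fact N"
proof -
  have "(\<Sum>k\<le>N. sc k) = (\<Sum>k\<le>N. ((1/2::real) gchoose k) * (-1)^k)"
    by (simp add: sc_def mult.commute)
  also have "\<dots> = (-1)^N * ((1/2 - 1) gchoose N)" by (rule gbinomial_sum_lower_neg)
  also have "\<dots> = pochhammer (1/2) N / fact N"
    by (simp add: gbinomial_pochhammer power_mult_distrib[symmetric])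
  finally show ?thesis .
qed

lemma sc_partial_nonneg: "(\<Sum>k\<le>N. sc k) \<ge> 0"
  unfolding sc_partial by (intro divide_nonneg_pos less_imp_le pochhammer_pos) auto

lemma abs_sc: "\<bar>sc k\<bar> = (if k = 0 then 1 else - sc k)"
  using sc_nonpos[of k] by auto

lemma summable_abs_sc: "summable (\<lambda>k. \<bar>sc k\<bar>)"
proof (rule bounded_imp_summable[where B = 2])
  fix N
  have "(\<Sum>k\<le>N. \<bar>sc k\<bar>) = (\<Sum>k\<le>N. (if k = 0 then 2 else 0) - sc k)"
    by (rule sum.cong) (auto simp: abs_sc)
  also have "\<dots> = 2 - (\<Sum>k\<le>N. sc k)" by (simp add: sum_subtractf)
  also have "\<dots> \<le> 2" using sc_partial_nonneg[of N] by simp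
  finally show "(\<Sum>k\<le>N. \<bar>sc k\<bar>) \<le> 2" .
qed auto

lemma summable_sc: "summable sc"
  using summable_abs_sc by (rule summable_rabs_cancel)

lemma suminf_sc_nonneg: "suminf sc \<ge> 0"
proof -
  have "(\<lambda>n. sum sc {..<n}) \<longlonglongrightarrow> suminf sc" by (rule summable_LIMSEQ[OF summable_sc])
  moreover have "\<forall>n\<ge>1. 0 \<le> sum sc {..<n}"
  proof (intro allI impI)
    fix n :: nat assume "n \<ge> 1"
    then obtain m where "n = Suc m" by (cases n) auto
    then show "0 \<le> sum sc {..<n}" using sc_partial_nonneg[of m] by (simp add: lessThan_Suc_atMost)
  qed
  ultimately show ?thesis by (intro LIMSEQ_le_const) auto
qed

lemma sc_conv: "(\<Sum>i\<le>m. sc i * sc (m - i)) = (if m = 0 then 1 else if m = 1 then -1 else 0)"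
proof -
  have "(\<Sum>i\<le>m. sc i * sc (m - i)) = (\<Sum>i\<le>m. (-1)^m * (((1/2::real) gchoose i) * ((1/2) gchoose (m - i))))"
  proof (rule sum.cong)
    fix i assume "i \<in> {..m}"
    then have "(-1::real)^i * (-1)^(m-i) = (-1)^m" by (simp add: power_add[symmetric])
    then show "sc i * sc (m - i) = (-1)^m * (((1/2::real) gchoose i) * ((1/2) gchoose (m - i)))"
      by (simp add: sc_def algebra_simps)
  qed simp
  also have "\<dots> = (-1)^m * (\<Sum>i=0..m. ((1/2::real) gchoose i) * ((1/2) gchoose (m - i)))"
    by (simp add: sum_distrib_left atLeast0AtMost)
  also have "\<dots> = (-1)^m * ((1::real) gchoose m)"
    using gbinomial_Vandermonde[of "1/2::real" "1/2" m] by simp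
  also have "\<dots> = (if m = 0 then 1 else if m = 1 then -1 else 0)"
  proof -
    have "(1::real) gchoose m = of_nat (1 choose m)" using binomial_gbinomial[of 1 m, where 'a = real] by simp
    then show ?thesis by (cases m) (auto simp: binomial_eq_0)
  qed
  finally show ?thesis .
qed

section \<open>Cauchy product for a bounded bilinear map\<close>

lemma bilinear_Cauchy_product_sums:
  fixes a :: "nat \<Rightarrow> 'a::banach" and b :: "nat \<Rightarrow> 'b::banach" and prod :: "'a \<Rightarrow> 'b \<Rightarrow> 'c::banach"
  assumes bb: "bounded_bilinear prod"
    and a: "summable (\<lambda>k. norm (a k))"
    and b: "summable (\<lambda>k. norm (b k))"
  shows "(\<lambda>k. \<Sum>i\<le>k. prod (a i) (b (k - i))) sums (prod (\<Sum>k. a k) (\<Sum>k. b k))"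
proof -
  obtain K where K: "K > 0" "\<And>x y. norm (prod x y) \<le> norm x * norm y * K"
    using bounded_bilinear.pos_bounded[OF bb] by blast
  let ?S1 = "\<lambda>n::nat. {..<n} \<times> {..<n}"
  let ?S2 = "\<lambda>n::nat. {(i,j). i + j < n}"
  have S1_mono: "\<And>m n. m \<le> n \<Longrightarrow> ?S1 m \<subseteq> ?S1 n" by auto
  have S2_le_S1: "\<And>n. ?S2 n \<subseteq> ?S1 n" by auto
  have S1_le_S2: "\<And>n. ?S1 (n div 2) \<subseteq> ?S2 n" by auto
  have finite_S1: "\<And>n. finite (?S1 n)" by simp
  with S2_le_S1 have finite_S2: "\<And>n. finite (?S2 n)" by (rule finite_subset)
  let ?g = "\<lambda>(i,j). prod (a i) (b j)"
  let ?f = "\<lambda>(i,j). norm (a i) * norm (b j)"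
  have f_nonneg: "\<And>x. 0 \<le> ?f x" by auto
  then have norm_sum_f: "\<And>A. norm (sum ?f A) = sum ?f A"
    unfolding real_norm_def by (simp only: abs_of_nonneg sum_nonneg [rule_format])
  have prod_sum: "prod (sum a {..<n}) (sum b {..<n}) = sum ?g (?S1 n)" for n
    unfolding bounded_bilinear.sum_left[OF bb] unfolding bounded_bilinear.sum_right[OF bb]
    by (simp add: sum.cartesian_product)
  have "(\<lambda>n. prod (\<Sum>k<n. a k) (\<Sum>k<n. b k)) \<longlonglongrightarrow> prod (\<Sum>k. a k) (\<Sum>k. b k)"
    by (intro bounded_bilinear.tendsto[OF bb] summable_LIMSEQ summable_norm_cancel [OF a] summable_norm_cancel [OF b])
  then have 1: "(\<lambda>n. sum ?g (?S1 n)) \<longlonglongrightarrow> prod (\<Sum>k. a k) (\<Sum>k. b k)"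
    by (simp only: prod_sum)
  have "(\<lambda>n. (\<Sum>k<n. norm (a k)) * (\<Sum>k<n. norm (b k))) \<longlonglongrightarrow> (\<Sum>k. norm (a k)) * (\<Sum>k. norm (b k))"
    using a b by (intro tendsto_mult summable_LIMSEQ)
  then have "(\<lambda>n. sum ?f (?S1 n)) \<longlonglongrightarrow> (\<Sum>k. norm (a k)) * (\<Sum>k. norm (b k))"
    by (simp only: sum_product sum.Sigma [rule_format] finite_lessThan)
  then have "convergent (\<lambda>n. sum ?f (?S1 n))"
    by (rule convergentI)
  then have Cauchy: "Cauchy (\<lambda>n. sum ?f (?S1 n))"
    by (rule convergent_Cauchy)
  have "Zfun (\<lambda>n. sum ?f (?S1 n - ?S2 n)) sequentially"
  proof (rule ZfunI, simp only: eventually_sequentially norm_sum_f)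
    fix r :: real
    assume r: "0 < r"
    from CauchyD [OF Cauchy r] obtain N
      where "\<forall>m\<ge>N. \<forall>n\<ge>N. norm (sum ?f (?S1 m) - sum ?f (?S1 n)) < r" ..
    then have "\<And>m n. N \<le> n \<Longrightarrow> n \<le> m \<Longrightarrow> norm (sum ?f (?S1 m - ?S1 n)) < r"
      by (simp only: sum_diff finite_S1 S1_mono)
    then have N: "\<And>m n. N \<le> n \<Longrightarrow> n \<le> m \<Longrightarrow> sum ?f (?S1 m - ?S1 n) < r"
      by (simp only: norm_sum_f)
    show "\<exists>N. \<forall>n\<ge>N. sum ?f (?S1 n - ?S2 n) < r"
    proof (intro exI allI impI)
      fix n
      assume "2 * N \<le> n"
      then have n: "N \<le> n div 2" by simp
      have "sum ?f (?S1 n - ?S2 n) \<le> sum ?f (?S1 n - ?S1 (n div 2))"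
        by (intro sum_mono2 finite_Diff finite_S1 f_nonneg Diff_mono subset_refl S1_le_S2)
      also have "\<dots> < r"
        using n div_le_dividend by (rule N)
      finally show "sum ?f (?S1 n - ?S2 n) < r" .
    qed
  qed
  then have "Zfun (\<lambda>n. sum ?f (?S1 n - ?S2 n) * K) sequentially"
    by (rule Zfun_mult_left)
  then have "Zfun (\<lambda>n. sum ?g (?S1 n - ?S2 n)) sequentially"
  proof (rule Zfun_le [rule_format])
    fix n
    have "norm (sum ?g (?S1 n - ?S2 n)) \<le> (\<Sum>x\<in>?S1 n - ?S2 n. norm (?g x))" by (rule norm_sum)
    also have "\<dots> \<le> (\<Sum>x\<in>?S1 n - ?S2 n. ?f x * K)"
      by (intro sum_mono) (auto simp: K(2))
    also have "\<dots> = norm (sum ?f (?S1 n - ?S2 n) * K)"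
    proof -
      have "0 \<le> sum ?f (?S1 n - ?S2 n)" by (rule sum_nonneg) (rule f_nonneg)
      then show ?thesis using K(1) by (simp add: sum_distrib_right[symmetric] norm_mult)
    qed
    finally show "norm (sum ?g (?S1 n - ?S2 n)) \<le> norm (sum ?f (?S1 n - ?S2 n) * K)" .
  qed
  then have 2: "(\<lambda>n. sum ?g (?S1 n) - sum ?g (?S2 n)) \<longlonglongrightarrow> 0"
    unfolding tendsto_Zfun_iff diff_0_right
    by (simp only: sum_diff finite_S1 S2_le_S1)
  with 1 have "(\<lambda>n. sum ?g (?S2 n)) \<longlonglongrightarrow> prod (\<Sum>k. a k) (\<Sum>k. b k)"
    by (rule Lim_transform2)
  then show ?thesis
    by (simp only: sums_def sum.triangle_reindex)
qed


section \<open>The square root series\<close>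

definition sqr :: "('a::complex_inner \<Rightarrow> 'a) \<Rightarrow> 'a \<Rightarrow> 'a" where
  "sqr C x = (\<Sum>k. sc k *\<^sub>R (C ^^ k) x)"

lemma iter_contr:
  fixes C :: "'a::real_normed_vector \<Rightarrow> 'a"
  assumes "\<And>x. norm (C x) \<le> norm x"
  shows "norm ((C ^^ k) x) \<le> norm x"
proof (induction k)
  case 0 then show ?case by simp
next
  case (Suc k)
  have "norm ((C ^^ Suc k) x) = norm (C ((C ^^ k) x))" by simp
  also have "\<dots> \<le> norm ((C ^^ k) x)" by (rule assms)
  finally show ?case using Suc by simp
qed

lemma sqr_summable_norm:
  fixes C :: "'a::real_normed_vector \<Rightarrow> 'a"
  assumes "\<And>x. norm (C x) \<le> norm x"
  shows "summable (\<lambda>k. norm (sc k *\<^sub>R (C ^^ k) x))"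
proof (rule summable_comparison_test[OF _ summable_mult2[OF summable_abs_sc, of "norm x"]])
  show "\<exists>N. \<forall>n\<ge>N. norm (norm (sc n *\<^sub>R (C ^^ n) x)) \<le> \<bar>sc n\<bar> * norm x"
    using iter_contr[OF assms] by (auto intro!: mult_left_mono)
qed

lemma sqr_summable:
  fixes C :: "'a::chilbert \<Rightarrow> 'a"
  assumes "\<And>x. norm (C x) \<le> norm x"
  shows "summable (\<lambda>k. sc k *\<^sub>R (C ^^ k) x)"
  by (rule summable_norm_cancel[OF sqr_summable_norm[of C x, OF assms]])

lemma iter_intertwine:
  fixes C1 C2 T :: "'a \<Rightarrow> 'a"
  assumes "\<And>x. T (C1 x) = C2 (T x)"
  shows "T ((C1 ^^ k) x) = (C2 ^^ k) (T x)"
  by (induction k) (auto simp: assms)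

lemma sqr_intertwine:
  fixes C1 C2 T :: "'a::chilbert \<Rightarrow> 'a"
  assumes T: "bounded_op T" and c1: "\<And>x. norm (C1 x) \<le> norm x"
    and it: "\<And>x. T (C1 x) = C2 (T x)"
  shows "T (sqr C1 x) = sqr C2 (T x)"
proof -
  have "T (sqr C1 x) = (\<Sum>k. T (sc k *\<^sub>R (C1 ^^ k) x))"
    unfolding sqr_def by (rule bounded_linear.suminf[OF bop_linear[OF T] sqr_summable[OF c1]])
  also have "\<dots> = sqr C2 (T x)"
    unfolding sqr_def by (simp add: bop_scaleR[OF T] iter_intertwine[of T C1 C2, OF it])
  finally show ?thesis .
qed

lemma sqr_bop:
  fixes C :: "'a::chilbert \<Rightarrow> 'a"
  assumes C: "bounded_op C" and c: "\<And>x. norm (C x) \<le> norm x"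
  shows "bounded_op (sqr C)"
proof -
  have Ck: "bounded_op (C ^^ k)" for k by (rule bop_iter[OF C])
  have add: "sqr C (x + y) = sqr C x + sqr C y" for x y
  proof -
    have "sqr C x + sqr C y = (\<Sum>k. sc k *\<^sub>R (C ^^ k) x + sc k *\<^sub>R (C ^^ k) y)"
      unfolding sqr_def by (rule suminf_add[OF sqr_summable[OF c] sqr_summable[OF c]])
    then show ?thesis unfolding sqr_def by (simp add: bop_add[OF Ck] scaleR_add_right)
  qed
  have scl: "sqr C (scaleC a x) = scaleC a (sqr C x)" for a x
  proof -
    have "scaleC a (sqr C x) = (\<Sum>k. scaleC a (sc k *\<^sub>R (C ^^ k) x))"
      unfolding sqr_def by (rule bounded_linear.suminf[OF bounded_linear_scaleC sqr_summable[OF c]])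
    then show ?thesis unfolding sqr_def by (simp add: bop_scaleC[OF Ck] scaleC_scaleR_comm)
  qed
  have bd: "norm (sqr C x) \<le> norm x * (\<Sum>k. \<bar>sc k\<bar>)" for x
  proof -
    have "norm (sqr C x) \<le> (\<Sum>k. norm (sc k *\<^sub>R (C ^^ k) x))"
      unfolding sqr_def by (rule summable_norm[OF sqr_summable_norm[of C x, OF c]])
    also have "\<dots> \<le> (\<Sum>k. \<bar>sc k\<bar> * norm x)"
      using iter_contr[OF c] sqr_summable_norm[of C x, OF c] summable_mult2[OF summable_abs_sc]
      by (intro suminf_le) (auto intro!: mult_left_mono)
    also have "\<dots> = norm x * (\<Sum>k. \<bar>sc k\<bar>)"
      using suminf_mult2[OF summable_abs_sc, of "norm x"] by (simp add: mult.commute)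
    finally show ?thesis .
  qed
  show ?thesis unfolding bounded_op_def using add scl bd by blast
qed

lemma sqr_sq:
  fixes C :: "'a::chilbert \<Rightarrow> 'a"
  assumes C: "bounded_op C" and c: "\<And>x. norm (C x) \<le> norm x"
  shows "sqr C (sqr C x) = x - C x"
proof -
  have Ck: "bounded_linear (C ^^ k)" for k by (rule bop_linear[OF bop_iter[OF C]])
  define a where "a = (\<lambda>i. sc i *\<^sub>R Blinfun (C ^^ i))"
  define b where "b = (\<lambda>k. sc k *\<^sub>R (C ^^ k) x)"
  have ap: "blinfun_apply (a i) y = sc i *\<^sub>R (C ^^ i) y" for i y
    by (simp add: a_def blinfun.scaleR_left bounded_linear_Blinfun_apply[OF Ck])
  have na: "norm (a i) \<le> \<bar>sc i\<bar>" for i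
  proof -
    have "norm (Blinfun (C ^^ i)) \<le> 1"
      by (rule norm_blinfun_bound) (auto simp: bounded_linear_Blinfun_apply[OF Ck] iter_contr[OF c])
    then show ?thesis by (simp add: a_def mult_left_le)
  qed
  have sa: "summable (\<lambda>i. norm (a i))"
    by (rule summable_comparison_test[OF _ summable_abs_sc]) (auto simp: na)
  have sb: "summable (\<lambda>k. norm (b k))" unfolding b_def by (rule sqr_summable_norm[of C x, OF c])
  have app: "blinfun_apply (\<Sum>i. a i) y = sqr C y" for y
  proof -
    have "blinfun_apply (\<Sum>i. a i) y = (\<Sum>i. blinfun_apply (a i) y)"
      by (rule bounded_linear.suminf[OF blinfun.bounded_linear_left summable_norm_cancel[OF sa]])
    then show ?thesis by (simp add: ap sqr_def)
  qed
  have "(\<lambda>k. \<Sum>i\<le>k. blinfun_apply (a i) (b (k - i))) sums (blinfun_apply (\<Sum>k. a k) (\<Sum>k. b k))"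
    by (rule bilinear_Cauchy_product_sums[OF bounded_bilinear_blinfun_apply sa sb])
  moreover have "(\<Sum>k. b k) = sqr C x" by (simp add: b_def sqr_def)
  moreover have "(\<lambda>k. \<Sum>i\<le>k. blinfun_apply (a i) (b (k - i))) =
                 (\<lambda>k. (if k = 0 then 1 else if k = 1 then -1 else 0) *\<^sub>R (C ^^ k) x)"
  proof
    fix k
    have "(\<Sum>i\<le>k. blinfun_apply (a i) (b (k - i))) = (\<Sum>i\<le>k. (sc i * sc (k - i)) *\<^sub>R (C ^^ k) x)"
    proof (rule sum.cong)
      fix i assume "i \<in> {..k}"
      then have "(C ^^ i) ((C ^^ (k - i)) x) = (C ^^ k) x"
        by (metis (no_types) funpow_add le_add_diff_inverse atMost_iff comp_apply)
      then show "blinfun_apply (a i) (b (k - i)) = (sc i * sc (k - i)) *\<^sub>R (C ^^ k) x"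
        by (simp add: ap b_def bop_scaleR[OF bop_iter[OF C]])
    qed simp
    also have "\<dots> = (\<Sum>i\<le>k. sc i * sc (k - i)) *\<^sub>R (C ^^ k) x" by (simp add: scaleR_sum_left)
    finally show "(\<Sum>i\<le>k. blinfun_apply (a i) (b (k - i))) =
        (if k = 0 then 1 else if k = 1 then -1 else 0) *\<^sub>R (C ^^ k) x" by (simp add: sc_conv)
  qed
  ultimately have s1: "(\<lambda>k. (if k = 0 then 1 else if k = 1 then -1 else 0) *\<^sub>R (C ^^ k) x) sums sqr C (sqr C x)"
    by (simp add: app)
  have "(\<lambda>k. (if k = 0 then 1 else if k = 1 then -1 else 0) *\<^sub>R (C ^^ k) x) sums
        (\<Sum>k\<in>{0,1}. (if k = 0 then 1 else if k = 1 then -1 else 0) *\<^sub>R (C ^^ k) x)"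
    by (rule sums_finite) auto
  then have s2: "(\<lambda>k. (if k = 0 then 1 else if k = 1 then -1 else 0) *\<^sub>R (C ^^ k) x) sums (x - C x)"
    by simp
  show ?thesis using s1 s2 by (rule sums_unique2)
qed


lemma quad_lemma:
  fixes a :: complex and K :: real
  assumes h: "\<And>t. 0 \<le> Re (t * a + cnj t * cnj a) + (cmod t)\<^sup>2 * K" and K: "K \<ge> 0"
  shows "a = 0"
proof -
  have cm: "(cmod a)^2 = Re a * Re a + Im a * Im a" using cmod_power2[of a] by (simp add: power2_eq_square)
  have "(cmod a)^2 = 0"
  proof (rule quad_zero[where K = K])
    fix s :: real assume s: "s > 0"
    have cm2: "cmod a * cmod a = Re a * Re a + Im a * Im a" using cm by (simp add: power2_eq_square)
    have "0 \<le> Re ((- of_real s * cnj a) * a + cnj (- of_real s * cnj a) * cnj a) + (cmod (- of_real s * cnj a))\<^sup>2 * K"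
      by (rule h)
    also have "\<dots> = - 2 * s * (cmod a)^2 + s^2 * (cmod a)^2 * K"
      unfolding cm using s by (simp add: norm_mult power_mult_distrib cm2 algebra_simps power2_eq_square)
    finally show "2 * s * (cmod a)\<^sup>2 \<le> s\<^sup>2 * (cmod a)\<^sup>2 * K" by simp
  qed (use K in auto)
  then show ?thesis by simp
qed

lemma pos_bop: "positive_op R \<Longrightarrow> bounded_op R" by (simp add: positive_op_def)
lemma pos_Im: "positive_op R \<Longrightarrow> Im (cinner (R x) x) = 0" by (simp add: positive_op_def)
lemma pos_Re: "positive_op R \<Longrightarrow> 0 \<le> Re (cinner (R x) x)" by (simp add: positive_op_def)

lemma pos_selfadj:
  assumes R: "positive_op R"
  shows "cinner (R x) y = cinner x (R y)"
proof -
  have B: "bounded_op R" using R by (rule pos_bop)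
  define a where "a = cinner (R x) y"
  define b where "b = cinner x (R y)"
  have c1: "cinner (R y) x = cnj b" by (simp add: b_def cinner_cnj_swap)
  have "Im (cinner (R (x + y)) (x + y)) = 0" by (rule pos_Im[OF R])
  then have "Im (cinner (R x) x) + Im a + Im (cnj b) + Im (cinner (R y) y) = 0"
    by (simp add: bop_add[OF B] cinner_add_left cinner_add_right a_def c1)
  then have i1: "Im a = Im b" using pos_Im[OF R, of x] pos_Im[OF R, of y] by simp
  have "Im (cinner (R (x + scaleC \<i> y)) (x + scaleC \<i> y)) = 0" by (rule pos_Im[OF R])
  then have "Im (cinner (R x) x + \<i> * a + (- \<i>) * cnj b + cinner (R y) y) = 0"
    by (simp add: bop_add[OF B] bop_scaleC[OF B] cinner_add_left cinner_add_right
        cinner_scaleC_left cinner_scaleC_right a_def c1 algebra_simps)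
  then have i2: "Re a = Re b" using pos_Im[OF R, of x] pos_Im[OF R, of y] by simp
  show ?thesis using i1 i2 by (simp add: complex_eq_iff a_def b_def)
qed

lemma pos_zero:
  assumes R: "positive_op R" and y: "cinner (R y) y = 0"
  shows "R y = 0"
proof -
  have B: "bounded_op R" using R by (rule pos_bop)
  have "cinner (R y) z = 0" for z
  proof (rule quad_lemma[where K = "Re (cinner (R z) z)"])
    fix t
    have e: "cinner (R z) y = cnj (cinner (R y) z)"
      by (simp add: pos_selfadj[OF R] cinner_cnj_swap)
    have tt: "cnj t * t = complex_of_real ((cmod t)^2)" using complex_norm_square[of t]
      by (simp add: mult.commute)
    have "0 \<le> Re (cinner (R (y + scaleC t z)) (y + scaleC t z))" by (rule pos_Re[OF R])
    also have "cinner (R (y + scaleC t z)) (y + scaleC t z) =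
        cinner (R y) y + t * cinner (R y) z + cnj t * cinner (R z) y + (cnj t * t) * cinner (R z) z"
      by (simp add: bop_add[OF B] bop_scaleC[OF B] cinner_add_left cinner_add_right
          cinner_scaleC_left cinner_scaleC_right algebra_simps)
    also have "Re \<dots> = Re (t * cinner (R y) z + cnj t * cnj (cinner (R y) z)) + (cmod t)\<^sup>2 * Re (cinner (R z) z)"
      unfolding e tt y using pos_Im[OF R, of z] by simp
    finally show "0 \<le> Re (t * cinner (R y) z + cnj t * cnj (cinner (R y) z)) + (cmod t)\<^sup>2 * Re (cinner (R z) z)" .
  qed (rule pos_Re[OF R])
  then have "cinner (R y) (R y) = 0" by blast
  then show ?thesis by (simp add: cinner_eq_zero_iff)
qed

section \<open>Square roots of I - Q^* Q\<close>

lemma QQ_facts: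
  fixes Q :: "'a::chilbert \<Rightarrow> 'a"
  assumes Q: "bounded_op Q" and q: "\<And>x. norm (Q x) \<le> norm x"
  defines "C \<equiv> (\<lambda>x. hadjoint Q (Q x))"
  shows "bounded_op C" "\<And>x. norm (C x) \<le> norm x" "\<And>x y. cinner (C x) y = cinner x (C y)"
    "\<And>x. cinner (C x) x = cinner (Q x) (Q x)"
proof -
  show "bounded_op C" unfolding C_def by (rule bop_comp[OF adj_bop[OF Q] Q])
  show "\<And>x. norm (C x) \<le> norm x"
  proof -
    fix x
    have "norm (C x) \<le> norm (Q x) * 1" unfolding C_def by (rule adj_norm[OF Q]) (auto simp: q)
    then show "norm (C x) \<le> norm x" using q[of x] by simp
  qed
  show "\<And>x y. cinner (C x) y = cinner x (C y)"
    unfolding C_def by (simp add: adj_prop2[OF Q] adj_prop[OF Q])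
  show "\<And>x. cinner (C x) x = cinner (Q x) (Q x)"
    unfolding C_def by (simp add: adj_prop2[OF Q])
qed

lemma iter_selfadj:
  fixes C :: "'a::complex_inner \<Rightarrow> 'a"
  assumes sa: "\<And>x y. cinner (C x) y = cinner x (C y)"
  shows "cinner ((C ^^ k) x) y = cinner x ((C ^^ k) y)"
proof (induction k arbitrary: y)
  case 0 then show ?case by simp
next
  case (Suc k)
  have "cinner ((C ^^ Suc k) x) y = cinner ((C ^^ k) x) (C y)" by (simp add: sa)
  also have "\<dots> = cinner x ((C ^^ k) (C y))" by (rule Suc)
  also have "\<dots> = cinner x ((C ^^ Suc k) y)" by (simp add: funpow_swap1)
  finally show ?case .
qed

lemma iter_real:
  fixes Q :: "'a::chilbert \<Rightarrow> 'a"
  assumes Q: "bounded_op Q" and q: "\<And>x. norm (Q x) \<le> norm x"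
  defines "C \<equiv> (\<lambda>x. hadjoint Q (Q x))"
  shows "\<exists>t\<ge>0. cinner ((C ^^ k) x) x = complex_of_real t"
proof -
  have sa: "\<And>x y. cinner (C x) y = cinner x (C y)" and cq: "\<And>x. cinner (C x) x = cinner (Q x) (Q x)"
    using QQ_facts[OF Q q] unfolding C_def by auto
  define m where "m = k div 2"
  define u where "u = (C ^^ m) x"
  have k: "k = m + m \<or> k = Suc (m + m)" unfolding m_def by presburger
  then show ?thesis
  proof
    assume k: "k = m + m"
    have "cinner ((C ^^ k) x) x = cinner ((C ^^ m) u) x" by (simp add: k u_def funpow_add)
    also have "\<dots> = cinner u u" by (simp add: iter_selfadj[OF sa] u_def)
    finally show ?thesis by (auto simp: cinner_self intro!: exI[of _ "(norm u)^2"])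
  next
    assume k: "k = Suc (m + m)"
    have "cinner ((C ^^ k) x) x = cinner ((C ^^ m) (C u)) x" by (simp add: k u_def funpow_add funpow_swap1)
    also have "\<dots> = cinner (C u) u" by (simp add: iter_selfadj[OF sa] u_def)
    also have "\<dots> = cinner (Q u) (Q u)" by (rule cq)
    finally show ?thesis by (auto simp: cinner_self intro!: exI[of _ "(norm (Q u))^2"])
  qed
qed

lemma sqr_positive:
  fixes Q :: "'a::chilbert \<Rightarrow> 'a"
  assumes Q: "bounded_op Q" and q: "\<And>x. norm (Q x) \<le> norm x"
  defines "C \<equiv> (\<lambda>x. hadjoint Q (Q x))"
  shows "positive_op (sqr C)"
proof -
  have Cb: "bounded_op C" and c: "\<And>x. norm (C x) \<le> norm x"
    using QQ_facts[OF Q q] unfolding C_def by auto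
  have r: "\<exists>t\<ge>0. cinner ((C ^^ k) x) x = complex_of_real t" for k x
    unfolding C_def by (rule iter_real[OF Q q])
  have main: "Im (cinner (sqr C x) x) = 0 \<and> 0 \<le> Re (cinner (sqr C x) x)" for x
  proof -
    define r where "r = (\<lambda>k. cinner ((C ^^ k) x) x)"
    have rI: "Im (r k) = 0" for k using r[of k x] by (auto simp: r_def)
    have rR: "0 \<le> Re (r k)" for k using r[of k x] by (auto simp: r_def)
    have rle: "Re (r k) \<le> (norm x)^2" for k
    proof -
      have "Re (r k) \<le> cmod (r k)" by (rule complex_Re_le_cmod)
      also have "\<dots> \<le> norm ((C ^^ k) x) * norm x" unfolding r_def by (rule cauchy_schwarz)
      also have "\<dots> \<le> norm x * norm x" by (intro mult_right_mono iter_contr[OF c]) auto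
      finally show ?thesis by (simp add: power2_eq_square)
    qed
    have r0: "Re (r 0) = (norm x)^2" by (simp add: r_def Re_cinner_self)
    have s: "(\<lambda>k. cinner (sc k *\<^sub>R (C ^^ k) x) x) sums cinner (sqr C x) x"
      unfolding sqr_def
      by (rule bounded_linear.sums[OF bounded_linear_cinner_left summable_sums[OF sqr_summable[OF c]]])
    have sR: "(\<lambda>k. sc k * Re (r k)) sums Re (cinner (sqr C x) x)"
      using sums_Re[OF s] by (simp add: cinner_scaleR_left r_def)
    have sI: "(\<lambda>k. sc k * Im (r k)) sums Im (cinner (sqr C x) x)"
      using sums_Im[OF s] by (simp add: cinner_scaleR_left r_def)
    have "Im (cinner (sqr C x) x) = 0" using sI by (simp add: rI sums_zero sums_unique2)
    moreover have "suminf sc * (norm x)^2 \<le> Re (cinner (sqr C x) x)"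
    proof (rule sums_le[OF _ sums_mult2[OF summable_sums[OF summable_sc]] sR])
      fix k show "sc k * (norm x)^2 \<le> sc k * Re (r k)"
      proof (cases "k = 0")
        case True then show ?thesis by (simp add: r0)
      next
        case False then show ?thesis using sc_nonpos[of k] rle[of k] by (simp add: mult_left_mono_neg)
      qed
    qed
    moreover have "0 \<le> suminf sc * (norm x)^2" using suminf_sc_nonneg by simp
    ultimately show ?thesis by simp
  qed
  show ?thesis unfolding positive_op_def using sqr_bop[OF Cb c] main by blast
qed

lemma sqr_unique:
  fixes Q :: "'a::chilbert \<Rightarrow> 'a"
  assumes Q: "bounded_op Q" and q: "\<And>x. norm (Q x) \<le> norm x"
  defines "C \<equiv> (\<lambda>x. hadjoint Q (Q x))"
  assumes R: "positive_op R" and RR: "\<And>x. R (R x) = x - C x"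
  shows "R = sqr C"
proof
  fix x
  have Cb: "bounded_op C" and c: "\<And>x. norm (C x) \<le> norm x"
    using QQ_facts[OF Q q] unfolding C_def by auto
  have S: "positive_op (sqr C)" unfolding C_def by (rule sqr_positive[OF Q q])
  have SS: "sqr C (sqr C x) = x - C x" for x by (rule sqr_sq[OF Cb c])
  have RB: "bounded_op R" using R by (rule pos_bop)
  have SB: "bounded_op (sqr C)" using S by (rule pos_bop)
  have RC: "R (C x) = C (R x)" for x
    using RR[of "R x"] RR[of x] by (simp add: bop_diff[OF RB])
  have RS: "R (sqr C x) = sqr C (R x)" for x by (rule sqr_intertwine[OF RB c RC])
  define y where "y = sqr C x - R x"
  have "sqr C y + R y = 0"
    by (simp add: y_def bop_diff[OF SB] bop_diff[OF RB] SS RR RS)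
  then have "Re (cinner (sqr C y) y) + Re (cinner (R y) y) = 0"
    by (metis cinner_add_left cinner_zero_left plus_complex.simps(1) zero_complex.simps(1))
  then have "Re (cinner (sqr C y) y) = 0" "Re (cinner (R y) y) = 0"
    using pos_Re[OF S, of y] pos_Re[OF R, of y] by auto
  then have "cinner (sqr C y) y = 0" "cinner (R y) y = 0"
    using pos_Im[OF S, of y] pos_Im[OF R, of y] by (auto simp: complex_eq_iff)
  then have z: "sqr C y = 0" "R y = 0" using pos_zero[OF S] pos_zero[OF R] by auto
  have "cinner y y = cinner x (sqr C y) - cinner x (R y)"
    by (simp add: y_def cinner_diff_left pos_selfadj[OF S] pos_selfadj[OF R])
  then have "cinner y y = 0" by (simp add: z)
  then have "y = 0" by (simp add: cinner_eq_zero_iff)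
  then show "R x = sqr C x" by (simp add: y_def)
qed

lemma defect_eq:
  fixes Q :: "'a::chilbert \<Rightarrow> 'a"
  assumes Q: "bounded_op Q" and q: "\<And>x. norm (Q x) \<le> norm x"
  shows "defect Q = sqr (\<lambda>x. hadjoint Q (Q x))"
proof -
  let ?C = "\<lambda>x. hadjoint Q (Q x)"
  have Cb: "bounded_op ?C" and c: "\<And>x. norm (?C x) \<le> norm x"
    using QQ_facts[OF Q q] by auto
  have P: "positive_op (sqr ?C) \<and> (\<forall>x. sqr ?C (sqr ?C x) = x - ?C x)"
    using sqr_positive[OF Q q] sqr_sq[OF Cb c] by blast
  have "\<exists>!R. positive_op R \<and> (\<forall>x. R (R x) = x - ?C x)"
  proof (rule ex1I[of _ "sqr ?C"])
    show "positive_op (sqr ?C) \<and> (\<forall>x. sqr ?C (sqr ?C x) = x - ?C x)" by (rule P)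
  next
    fix R assume "positive_op R \<and> (\<forall>x. R (R x) = x - ?C x)"
    then show "R = sqr ?C" using sqr_unique[OF Q q, of R] by blast
  qed
  then show ?thesis unfolding defect_def by (rule the1_equality) (rule P)
qed


lemma closed_zero_set:
  fixes f :: "'a::real_normed_vector \<Rightarrow> 'b::real_normed_vector"
  assumes "bounded_linear f"
  shows "closed {x. f x = 0}"
  by (intro closed_Collect_eq linear_continuous_on[OF assms] continuous_on_const)

lemma ker_orth:
  fixes D :: "'a::chilbert \<Rightarrow> 'a"
  assumes D: "positive_op D" and z: "D z = 0" and m: "m \<in> closure (range D)"
  shows "cinner z m = 0"
proof -
  have "range D \<subseteq> {m. cinner z m = 0}"
    using z by (auto simp: pos_selfadj[OF D, symmetric])
  moreover have "closed {m. cinner z m = 0}" by (rule closed_zero_set[OF bounded_linear_cinner_right])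
  ultimately have "closure (range D) \<subseteq> {m. cinner z m = 0}" by (rule closure_minimal)
  then show ?thesis using m by auto
qed

theorem mainTheorem17:
  fixes n :: nat and S :: "nat \<Rightarrow> 'a::chilbert \<Rightarrow> 'a" and P :: "'a \<Rightarrow> 'a"
    and A B :: "nat \<Rightarrow> 'a \<Rightarrow> 'a"
  assumes "gamma_contraction n S P"
    and "fundamental_tuple n S P A"
    and "fundamental_tuple n (\<lambda>i. hadjoint (S i)) (hadjoint P) B"
  shows "\<forall>i\<in>{1..n-1}. \<forall>x\<in>defect_space P. P (A i x) = hadjoint (B i) (P x)"
proof (intro ballI)
  fix i x assume i: "i \<in> {1..n-1}" and x: "x \<in> defect_space P"
  note G = assms(1) and FA = assms(2) and FB = assms(3)
  have n: "n \<ge> 1" using i by auto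
  define j where "j = n - i"
  have j: "j \<in> {1..n-1}" using i by (auto simp: j_def)
  have PB: "bounded_op P" and p: "\<And>x. norm (P x) \<le> norm x"
    using gamma_facts[OF G n] by auto
  have SiB: "bounded_op (S i)" and SjB: "bounded_op (S j)"
    using gamma_facts(2)[OF G n] i j by auto
  have comm: "\<And>x. S i (P x) = P (S i x)" using gamma_facts(3)[OF G n i] by auto
  define Pa where "Pa = hadjoint P"
  have PaB: "bounded_op Pa" unfolding Pa_def by (rule adj_bop[OF PB])
  have pa: "\<And>x. norm (Pa x) \<le> norm x"
    using adj_norm[OF PB, of 1] p unfolding Pa_def by simp
  have PaPa: "hadjoint Pa = P" unfolding Pa_def by (rule adj_adj[OF PB])
  define DP where "DP = defect P"
  define DQ where "DQ = defect Pa"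
  have DPe: "DP = sqr (\<lambda>x. Pa (P x))" unfolding DP_def Pa_def by (rule defect_eq[OF PB p])
  have DQe: "DQ = sqr (\<lambda>x. P (Pa x))" unfolding DQ_def using defect_eq[OF PaB pa] by (simp add: PaPa)
  have DPpos: "positive_op DP" unfolding DPe Pa_def by (rule sqr_positive[OF PB p])
  have DQpos: "positive_op DQ" unfolding DQe using sqr_positive[OF PaB pa] by (simp add: PaPa)
  have DPB: "bounded_op DP" and DQB: "bounded_op DQ" using DPpos DQpos by (auto simp: pos_bop)
  have inter: "P (DP u) = DQ (P u)" for u
  proof -
    have c1: "\<And>x. norm (Pa (P x)) \<le> norm x" using QQ_facts(2)[OF PB p] by (simp add: Pa_def)
    show ?thesis unfolding DPe DQe by (rule sqr_intertwine[OF PB c1]) simp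
  qed
  have opA: "op_on (defect_space P) (A i)" and eqA: "\<And>x. S i x - hadjoint (S j) (P x) = DP (A i (DP x))"
    using FA i unfolding fundamental_tuple_def DP_def j_def by auto
  have opB: "op_on (defect_space Pa) (B i)"
    and eqB: "\<And>x. hadjoint (S i) x - hadjoint (hadjoint (S j)) (Pa x) = DQ (B i (DQ x))"
    using FB i unfolding fundamental_tuple_def DQ_def j_def Pa_def by auto
  have AB: "bounded_op (A i)" and BB: "bounded_op (B i)" using opA opB by (auto simp: op_on_def)
  define Bs where "Bs = hadjoint (B i)"
  have BsB: "bounded_op Bs" unfolding Bs_def by (rule adj_bop[OF BB])
  have SjSj: "hadjoint (hadjoint (S j)) = S j" by (rule adj_adj[OF SjB])
  have keyB: "DQ (Bs (DQ u)) = S i u - P (hadjoint (S j) u)" for u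
  proof (rule cinner_ext)
    fix v
    have "cinner (DQ (Bs (DQ u))) v = cinner u (DQ (B i (DQ v)))"
      by (simp add: pos_selfadj[OF DQpos] Bs_def adj_prop2[OF BB])
    also have "\<dots> = cinner u (hadjoint (S i) v - S j (Pa v))" by (simp add: eqB[symmetric] SjSj)
    also have "\<dots> = cinner (S i u) v - cinner (P (hadjoint (S j) u)) v"
      by (simp add: cinner_diff_right adj_prop[OF SiB] adj_prop2[OF SjB, symmetric] adj_prop[OF PB] Pa_def)
    finally show "cinner (DQ (Bs (DQ u))) v = cinner (S i u - P (hadjoint (S j) u)) v"
      by (simp add: cinner_diff_left)
  qed
  define W where "W = (\<lambda>y. P (A i y) - Bs (P y))"
  have WB: "bounded_op W" unfolding W_def
    by (rule bop_diff_op[OF bop_comp[OF PB AB] bop_comp[OF BsB PB]])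
  have step1: "DQ (W (DP u)) = 0" for u
  proof -
    have "DQ (P (A i (DP u))) = P (DP (A i (DP u)))" by (simp add: inter)
    also have "\<dots> = P (S i u) - P (hadjoint (S j) (P u))" by (simp add: eqA[symmetric] bop_diff[OF PB])
    finally have 1: "DQ (P (A i (DP u))) = P (S i u) - P (hadjoint (S j) (P u))" .
    have 2: "DQ (Bs (P (DP u))) = S i (P u) - P (hadjoint (S j) (P u))" by (simp add: inter keyB)
    show ?thesis unfolding W_def bop_diff[OF DQB] 1 2 by (simp add: comm)
  qed
  have Pmaps: "P m \<in> defect_space Pa" if "m \<in> defect_space P" for m
  proof -
    have "P ` range DP \<subseteq> closure (range DQ)" by (auto simp: inter intro!: closure_subset[THEN subsetD])
    then have "P ` closure (range DP) \<subseteq> closure (range DQ)"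
      by (intro image_closure_subset linear_continuous_on bop_linear[OF PB]) auto
    then show ?thesis using that by (auto simp: defect_space_def DP_def DQ_def)
  qed
  have step2: "W (DP u) = 0" for u
  proof -
    let ?w = "W (DP u)"
    have orth: "cinner ?w m = 0" if "m \<in> defect_space Pa" for m
      using ker_orth[OF DQpos step1 that[unfolded defect_space_def DQ_def[symmetric]]] .
    have "DP u \<in> defect_space P" by (auto simp: defect_space_def DP_def intro: closure_subset[THEN subsetD])
    then have "A i (DP u) \<in> defect_space P" using opA by (auto simp: op_on_def)
    then have o1: "cinner ?w (P (A i (DP u))) = 0" by (intro orth Pmaps)
    have "B i ?w = 0" using opB orth by (auto simp: op_on_def)
    then have o2: "cinner ?w (Bs (P (DP u))) = 0" by (simp add: Bs_def adj_prop[OF BB, symmetric])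
    have "cinner ?w ?w = 0"
      by (subst (2) W_def) (simp add: cinner_diff_right o1 o2)
    then show ?thesis by (simp add: cinner_eq_zero_iff)
  qed
  have "range DP \<subseteq> {y. W y = 0}" using step2 by auto
  then have "closure (range DP) \<subseteq> {y. W y = 0}"
    by (rule closure_minimal) (rule closed_zero_set[OF bop_linear[OF WB]])
  then have "W x = 0" using x by (auto simp: defect_space_def DP_def)
  then show "P (A i x) = hadjoint (B i) (P x)" by (simp add: W_def Bs_def)
qed

end
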